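(* Let $G$ be a connected graph with at least $3$ vertices and $\lambda_3(G)=k$, and let $x,y$ be two adjacent vertices of $G$. Then $d_G(x)\ge k+1$ or $d_G(y)\ge k+1$.
   Context: For a graph $G$ and $S\subseteq V(G)$ with $|S|\ge 2$, an $S$-tree is a subgraph of $G$ that is a tree containing all vertices of $S$; $\lambda(S)$ is the maximum number of pairwise edge-disjoint $S$-trees, and $\lambda_3(G)=\min\{\lambda(S): |S|=3\}$. $d_G(v)$ is the degree of $v$ in $G$. *)

theory Defs
  imports Main
begin

definition graph :: "'a set \<Rightarrow> 'a set set \<Rightarrow> bool" where
  "graph V E \<longleftrightarrow> finite V \<and> (\<forall>e\<in>E. e \<subseteq> V \<and> card e = 2)"

definition adj :: "'a set set \<Rightarrow> 'a \<Rightarrow> 'a \<Rightarrow> bool" where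
  "adj E u v \<longleftrightarrow> {u, v} \<in> E"

definition connected_graph :: "'a set \<Rightarrow> 'a set set \<Rightarrow> bool" where
  "connected_graph V E \<longleftrightarrow>
     (\<forall>u\<in>V. \<forall>v\<in>V. (u, v) \<in> {(a, b). a \<in> V \<and> b \<in> V \<and> adj E a b}\<^sup>*)"

definition is_cycle :: "'a set set \<Rightarrow> 'a list \<Rightarrow> bool" where
  "is_cycle E cs \<longleftrightarrow> length cs \<ge> 3 \<and> distinct cs \<and>
     (\<forall>i. Suc i < length cs \<longrightarrow> adj E (cs ! i) (cs ! Suc i)) \<and>
     adj E (last cs) (hd cs)"

definition acyclic_graph :: "'a set set \<Rightarrow> bool" where
  "acyclic_graph E \<longleftrightarrow> \<not> (\<exists>cs. is_cycle E cs)"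

definition is_tree :: "'a set \<Rightarrow> 'a set set \<Rightarrow> bool" where
  "is_tree V E \<longleftrightarrow> graph V E \<and> connected_graph V E \<and> acyclic_graph E"

definition S_tree :: "'a set \<Rightarrow> 'a set set \<Rightarrow> 'a set \<Rightarrow> 'a set \<times> 'a set set \<Rightarrow> bool" where
  "S_tree V E S T \<longleftrightarrow> fst T \<subseteq> V \<and> snd T \<subseteq> E \<and> is_tree (fst T) (snd T) \<and> S \<subseteq> fst T"

definition lambda_S :: "'a set \<Rightarrow> 'a set set \<Rightarrow> 'a set \<Rightarrow> nat" where
  "lambda_S V E S = (GREATEST k. \<exists>T :: nat \<Rightarrow> 'a set \<times> 'a set set.
      (\<forall>i<k. S_tree V E S (T i)) \<and>
      (\<forall>i<k. \<forall>j<k. i \<noteq> j \<longrightarrow> snd (T i) \<inter> snd (T j) = {}))"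

definition lambda3 :: "'a set \<Rightarrow> 'a set set \<Rightarrow> nat" where
  "lambda3 V E = Min {lambda_S V E S | S. S \<subseteq> V \<and> card S = 3}"

definition degree :: "'a set set \<Rightarrow> 'a \<Rightarrow> nat" where
  "degree E v = card {e \<in> E. v \<in> e}"

end

theory Submission
  imports Defs
begin

lemma leave_set:
  assumes "(a, b) \<in> R\<^sup>*" "a \<in> A" "b \<notin> A"
  shows "\<exists>u w. u \<in> A \<and> w \<notin> A \<and> (u, w) \<in> R"
  using assms
proof (induction rule: rtrancl_induct)
  case base then show ?case by simp
next
  case (step c b)
  then show ?case by (cases "c \<in> A") auto
qed

lemma two_core:
  assumes conn: "connected_graph T F" and fin: "finite F"
    and xT: "x \<in> T" and yT: "y \<in> T" and xy: "x \<noteq> y"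
    and e1: "{x, w} \<in> F" and wy: "w \<noteq> y"
  shows "2 \<le> card (F \<inter> {e. x \<in> e \<or> y \<in> e})"
proof -
  let ?R = "{(a, b). a \<in> T \<and> b \<in> T \<and> adj F a b}"
  let ?D = "F \<inter> {e. x \<in> e \<or> y \<in> e}"
  have r: "(y, x) \<in> ?R\<^sup>*"
    using conn xT yT unfolding connected_graph_def by blast
  obtain u' w' where uw': "u' \<in> {y}" "w' \<notin> {y}" "(u', w') \<in> ?R"
    using leave_set[OF r, of "{y}"] xy by auto
  have e2: "{u', w'} \<in> F" using uw'(3) by (auto simp: adj_def)
  have ne: "{x, w} \<noteq> {u', w'}" using uw' xy wy by (auto simp: doubleton_eq_iff)
  have sub: "{{x, w}, {u', w'}} \<subseteq> ?D" using e1 e2 uw' by auto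
  have "card {{x, w}, {u', w'}} = 2" using ne by simp
  moreover have "card {{x, w}, {u', w'}} \<le> card ?D"
    using sub fin by (intro card_mono) auto
  ultimately show ?thesis by simp
qed

lemma tree_two_edges:
  assumes conn: "connected_graph T F" and fin: "finite F"
    and xT: "x \<in> T" and yT: "y \<in> T" and zT: "z \<in> T"
    and xy: "x \<noteq> y" and zx: "z \<noteq> x" and zy: "z \<noteq> y"
  shows "2 \<le> card (F \<inter> {e. x \<in> e \<or> y \<in> e})"
proof -
  let ?R = "{(a, b). a \<in> T \<and> b \<in> T \<and> adj F a b}"
  have r: "(x, z) \<in> ?R\<^sup>*"
    using conn xT zT unfolding connected_graph_def by blast
  obtain u w where uw: "u \<in> {x, y}" "w \<notin> {x, y}" "(u, w) \<in> ?R"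
    using leave_set[OF r, of "{x,y}"] zx zy by auto
  have e1: "{u, w} \<in> F" using uw(3) by (auto simp: adj_def)
  show ?thesis
  proof (cases "u = x")
    case True
    then show ?thesis using two_core[OF conn fin xT yT xy, of w] e1 uw by auto
  next
    case False
    then have "u = y" using uw by auto
    then have "2 \<le> card (F \<inter> {e. y \<in> e \<or> x \<in> e})"
      using two_core[OF conn fin yT xT, of w] e1 uw xy by auto
    moreover have "{e. y \<in> e \<or> x \<in> e} = {e. x \<in> e \<or> y \<in> e}" by auto
    ultimately show ?thesis by simp
  qed
qed

lemma count_bound:
  fixes F :: "nat \<Rightarrow> 'b set" and D :: "'b set"
  assumes fin: "finite D"
    and sub: "\<And>i. i < t \<Longrightarrow> F i \<subseteq> D"
    and disj: "\<And>i j. i < t \<Longrightarrow> j < t \<Longrightarrow> i \<noteq> j \<Longrightarrow> F i \<inter> F j = {}"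
    and two: "\<And>i. i < t \<Longrightarrow> 2 \<le> card (F i)"
  shows "2 * t \<le> card D"
proof -
  have fi: "\<And>i. i < t \<Longrightarrow> finite (F i)" using sub fin finite_subset by blast
  have "card (\<Union>i\<in>{..<t}. F i) = (\<Sum>i<t. card (F i))"
    by (rule card_UN_disjoint) (auto simp: fi disj)
  moreover have "(\<Sum>i<t. 2) \<le> (\<Sum>i<t. card (F i))"
    by (rule sum_mono) (simp add: two)
  moreover have "card (\<Union>i\<in>{..<t}. F i) \<le> card D"
    using sub fin by (intro card_mono) auto
  ultimately show ?thesis by simp
qed

theorem mainTheorem5:
  fixes V :: "'a set" and E :: "'a set set" and k :: nat and x y :: 'a
  assumes "graph V E"
    and "connected_graph V E"
    and "card V \<ge> 3"
    and "lambda3 V E = k"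
    and "x \<in> V" and "y \<in> V" and "{x, y} \<in> E"
  shows "degree E x \<ge> k + 1 \<or> degree E y \<ge> k + 1"
proof (rule ccontr)
  assume neg: "\<not> ?thesis"
  have finV: "finite V" using assms(1) by (simp add: graph_def)
  have finE: "finite E"
  proof -
    have "E \<subseteq> Pow V" using assms(1) by (auto simp: graph_def)
    then show ?thesis using finV finite_subset by blast
  qed
  have xy: "x \<noteq> y"
  proof
    assume "x = y"
    then have "card {x, y} = 1" by simp
    moreover have "card {x, y} = 2" using assms(1,7) by (auto simp: graph_def)
    ultimately show False by simp
  qed
  obtain z where z: "z \<in> V" "z \<noteq> x" "z \<noteq> y"
  proof -
    have "card {x, y} = 2" using xy by simp
    then have "\<not> V \<subseteq> {x, y}" using assms(3) finV
      by (metis card_mono finite.emptyI finite.insertI not_less_eq_eq numeral_3_eq_3 numeral_2_eq_2)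
    then show ?thesis using that by auto
  qed
  let ?D = "{e. x \<in> e \<or> y \<in> e}"
  let ?DE = "E \<inter> ?D"
  have dk: "degree E x \<le> k" "degree E y \<le> k" using neg by auto
  have cardD: "card ?DE + 1 \<le> degree E x + degree E y"
  proof -
    have un: "?DE = {e \<in> E. x \<in> e} \<union> {e \<in> E. y \<in> e}" by auto
    have "{x, y} \<in> {e \<in> E. x \<in> e} \<inter> {e \<in> E. y \<in> e}" using assms(7) by auto
    then have "1 \<le> card ({e \<in> E. x \<in> e} \<inter> {e \<in> E. y \<in> e})"
      using finE by (metis (no_types, lifting) card_0_eq empty_iff finite_Int finite_subset
          less_one mem_Collect_eq not_le subsetI)
    moreover have "card ({e \<in> E. x \<in> e} \<union> {e \<in> E. y \<in> e}) + card ({e \<in> E. x \<in> e} \<inter> {e \<in> E. y \<in> e})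
        = card {e \<in> E. x \<in> e} + card {e \<in> E. y \<in> e}"
      using finE card_Un_Int[of "{e \<in> E. x \<in> e}" "{e \<in> E. y \<in> e}"] by simp
    ultimately show ?thesis unfolding un degree_def by linarith
  qed
  let ?S = "{x, y, z}"
  let ?P = "\<lambda>t. \<exists>T :: nat \<Rightarrow> 'a set \<times> 'a set set.
      (\<forall>i<t. S_tree V E ?S (T i)) \<and>
      (\<forall>i<t. \<forall>j<t. i \<noteq> j \<longrightarrow> snd (T i) \<inter> snd (T j) = {})"
  have bound: "\<forall>t. ?P t \<longrightarrow> 2 * t \<le> card ?DE"
  proof (intro allI impI)
    fix t assume "?P t"
    then obtain T where T: "\<forall>i<t. S_tree V E ?S (T i)"
      "\<forall>i<t. \<forall>j<t. i \<noteq> j \<longrightarrow> snd (T i) \<inter> snd (T j) = {}" by blast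
    show "2 * t \<le> card ?DE"
    proof (rule count_bound[where F = "\<lambda>i. snd (T i) \<inter> ?D"])
      show "finite ?DE" using finE by simp
      fix i assume i: "i < t"
      then have st: "S_tree V E ?S (T i)" using T by auto
      then show "snd (T i) \<inter> ?D \<subseteq> ?DE" by (auto simp: S_tree_def)
      have fF: "finite (snd (T i))" using st finE finite_subset by (auto simp: S_tree_def)
      show "2 \<le> card (snd (T i) \<inter> ?D)"
        using st fF z xy
        by (intro tree_two_edges[where T = "fst (T i)" and z = z]) (auto simp: S_tree_def is_tree_def)
    next
      fix i j assume "i < t" "j < t" "i \<noteq> j"
      then show "(snd (T i) \<inter> ?D) \<inter> (snd (T j) \<inter> ?D) = {}" using T(2) by auto
    qed
  qed
  have P0: "?P 0" by simp
  have bound2: "t \<le> card ?DE" if "?P t" for t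
  proof -
    have "2 * t \<le> card ?DE" using bound that by blast
    then show ?thesis by linarith
  qed
  have "?P (lambda_S V E ?S)"
    unfolding lambda_S_def by (rule GreatestI_nat[where P = ?P and k = 0 and b = "card ?DE"]) (use P0 in simp, erule bound2)
  then have lam: "2 * lambda_S V E ?S \<le> card ?DE" using bound by blast
  have Sin: "lambda_S V E ?S \<in> {lambda_S V E S | S. S \<subseteq> V \<and> card S = 3}"
    using z xy assms(5,6) by auto
  have finset: "finite {lambda_S V E S | S. S \<subseteq> V \<and> card S = 3}"
  proof -
    have "{lambda_S V E S | S. S \<subseteq> V \<and> card S = 3} \<subseteq> (lambda_S V E) ` Pow V" by auto
    then show ?thesis using finV finite_subset by blast
  qed
  have "k \<le> lambda_S V E ?S"
    using Min_le[OF finset Sin] assms(4) by (simp add: lambda3_def)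
  then show False using lam cardD dk by linarith
qed

end
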